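(* Fix a string $x\in\{0,1\}^*$. Then $\mu_x(\varepsilon)=\rho(x)$, where $\varepsilon$ is the empty string, and for all nonempty strings $w=xy\in\{0,1\}^*$, \[ \mu_x(y1)=\mu_x(y)+1,\qquad \mu_x(y0)=\begin{cases}0&\text{if }\rho(xy)>\mu_x(y)=0,\\ \mu_x(y)-1&\text{otherwise.}\end{cases} \] Additionally, there exists a closed fork $F\vdash xy$ such that $\rho(F)=\rho(xy)$ and $\mu_x(F)=\mu_x(y)$.
   Context: Characteristic strings and forks. A characteristic string is $w=w_1\dots w_n\in\{0,1\}^n$; index $i$ is honest if $w_i=0$ and adversarial if $w_i=1$. A fork for $w$ is a rooted tree with edges directed away from the root $r$ and labeling $\ell:V\to\{0,\dots,n\}$ with (F1) $\ell(r)=0$; (F2) labels strictly increasing along directed paths; (F3) each honest index labels exactly one vertex; (F4) for honest $i<j$ the vertex labeled $i$ has strictly smaller depth than the vertex labeled $j$. Write $F\vdash w$. A vertex is honest if it is the root or labeled by an honest index. A tine is a directed path from the root; its length is its number of edges, $\ell(t)$ the label of its last vertex. A fork is closed if every leaf is honest (the single-vertex fork is closed); a closed fork has a unique longest tine $\hat t$. For closed $F\vdash w$ and tine $t$: $\mathrm{gap}(t)=\mathrm{length}(\hat t)-\mathrm{length}(t)$, $\mathrm{reserve}(t)=|\{i:w_i=1,\ i>\ell(t)\}|$, $\mathrm{reach}(t)=\mathrm{reserve}(t)-\mathrm{gap}(t)$; $\rho(F)=\max_t\mathrm{reach}(t)$ and $\rho(w)=\max\{\rho(F):F\vdash w\text{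 closed}\}$. For $w=xy$, tines $t_1,t_2$ are disjoint over $y$ if they share no edge terminating at a vertex whose label is an index of $y$ (label $>|x|$); a tine may be paired with itself. $\mu_x(F)=\max\min\{\mathrm{reach}(t_1),\mathrm{reach}(t_2)\}$ over pairs disjoint over $y$, and $\mu_x(y)=\max\{\mu_x(F):F\vdash xy\text{ closed}\}$. *)

theory Defs
  imports Main "HOL-Library.Sublist"
begin

(* Characteristic strings: bool lists, True = adversarial (1), False = honest (0).
   Indices are 1-based: w_i = w ! (i - 1). *)

definition honest_idx :: "bool list \<Rightarrow> nat \<Rightarrow> bool" where
  "honest_idx w i \<longleftrightarrow> 1 \<le> i \<and> i \<le> length w \<and> \<not> w ! (i - 1)"

definition adv_idx :: "bool list \<Rightarrow> nat \<Rightarrow> bool" where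
  "adv_idx w i \<longleftrightarrow> 1 \<le> i \<and> i \<le> length w \<and> w ! (i - 1)"

(* A rooted tree is a finite prefix-closed set T of nat lists containing [] (the root);
   the edges are v \<rightarrow> v @ [k].  The depth of v is length v, and the unique directed path
   from the root to v (a tine) is identified with its end vertex v.
   lab is the labelling (only its values on T matter). *)

definition is_tree :: "nat list set \<Rightarrow> bool" where
  "is_tree T \<longleftrightarrow> finite T \<and> [] \<in> T \<and> (\<forall>v k. v @ [k] \<in> T \<longrightarrow> v \<in> T)"

definition is_fork :: "bool list \<Rightarrow> nat list set \<Rightarrow> (nat list \<Rightarrow> nat) \<Rightarrow> bool" where
  "is_fork w T lab \<longleftrightarrow> is_tree T
     \<and> (\<forall>v\<in>T. lab v \<le> length w)
     \<and> lab [] = 0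
     \<and> (\<forall>v k. v @ [k] \<in> T \<longrightarrow> lab v < lab (v @ [k]))
     \<and> (\<forall>i. honest_idx w i \<longrightarrow> card {v \<in> T. lab v = i} = 1)
     \<and> (\<forall>u\<in>T. \<forall>v\<in>T. honest_idx w (lab u) \<and> honest_idx w (lab v) \<and> lab u < lab v
           \<longrightarrow> length u < length v)"

definition honest_vertex :: "bool list \<Rightarrow> (nat list \<Rightarrow> nat) \<Rightarrow> nat list \<Rightarrow> bool" where
  "honest_vertex w lab v \<longleftrightarrow> v = [] \<or> honest_idx w (lab v)"

definition is_leaf :: "nat list set \<Rightarrow> nat list \<Rightarrow> bool" where
  "is_leaf T v \<longleftrightarrow> v \<in> T \<and> (\<forall>k. v @ [k] \<notin> T)"

definition closed_fork :: "bool list \<Rightarrow> nat list set \<Rightarrow> (nat list \<Rightarrow> nat) \<Rightarrow> bool" where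
  "closed_fork w T lab \<longleftrightarrow> is_fork w T lab \<and> (\<forall>v. is_leaf T v \<longrightarrow> honest_vertex w lab v)"

definition max_len :: "nat list set \<Rightarrow> nat" where
  "max_len T = Max (length ` T)"

definition gap :: "nat list set \<Rightarrow> nat list \<Rightarrow> int" where
  "gap T t = int (max_len T) - int (length t)"

definition reserve :: "bool list \<Rightarrow> (nat list \<Rightarrow> nat) \<Rightarrow> nat list \<Rightarrow> int" where
  "reserve w lab t = int (card {i. adv_idx w i \<and> i > lab t})"

definition reach :: "bool list \<Rightarrow> nat list set \<Rightarrow> (nat list \<Rightarrow> nat) \<Rightarrow> nat list \<Rightarrow> int" where
  "reach w T lab t = reserve w lab t - gap T t"

definition rho_fork :: "bool list \<Rightarrow> nat list set \<Rightarrow> (nat list \<Rightarrow> nat) \<Rightarrow> int" where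
  "rho_fork w T lab = Max (reach w T lab ` T)"

definition rho_str :: "bool list \<Rightarrow> int" where
  "rho_str w = Max {rho_fork w T lab | T lab. closed_fork w T lab}"

(* For w = x y: tines t1, t2 (given by their end vertices) are disjoint over y if they share
   no edge terminating at a vertex whose label exceeds |x|.  A shared edge terminating at u
   means u \<noteq> [] is on both paths, i.e. a common nonempty prefix. *)
definition disjoint_over :: "bool list \<Rightarrow> (nat list \<Rightarrow> nat) \<Rightarrow> nat list \<Rightarrow> nat list \<Rightarrow> bool" where
  "disjoint_over x lab t1 t2 \<longleftrightarrow>
     \<not> (\<exists>u. u \<noteq> [] \<and> prefix u t1 \<and> prefix u t2 \<and> lab u > length x)"

definition mu_fork :: "bool list \<Rightarrow> bool list \<Rightarrow> nat list set \<Rightarrow> (nat list \<Rightarrow> nat) \<Rightarrow> int" where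
  "mu_fork x y T lab = Max {min (reach (x @ y) T lab t1) (reach (x @ y) T lab t2) | t1 t2.
       t1 \<in> T \<and> t2 \<in> T \<and> disjoint_over x lab t1 t2}"

definition mu_str :: "bool list \<Rightarrow> bool list \<Rightarrow> int" where
  "mu_str x y = Max {mu_fork x y T lab | T lab. closed_fork (x @ y) T lab}"

end

theory Submission
  imports Defs
begin


lemma tree_prefix:
  assumes "is_tree T" "v \<in> T" "prefix u v"
  shows "u \<in> T"
  using assms(2,3)
proof (induction v arbitrary: u rule: rev_induct)
  case Nil then show ?case by simp
next
  case (snoc a v)
  from snoc.prems(2) have "u = v @ [a] \<or> prefix u v"
    by (metis prefix_snoc)
  moreover have "v \<in> T" using assms(1) snoc.prems(1) unfolding is_tree_def by blast
  ultimately show ?case using snoc by blast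
qed

lemma fork_lab_strict:
  assumes "is_fork w T lab" "v \<in> T" "strict_prefix u v"
  shows "lab u < lab v"
  using assms(2,3)
proof (induction v arbitrary: u rule: rev_induct)
  case Nil then show ?case by simp
next
  case (snoc a v)
  have tr: "is_tree T" using assms(1) unfolding is_fork_def by blast
  have vT: "v \<in> T" using tr snoc.prems(1) unfolding is_tree_def by blast
  have lt: "lab v < lab (v @ [a])" using assms(1) snoc.prems(1) unfolding is_fork_def by blast
  from snoc.prems(2) have "u = v \<or> strict_prefix u v"
    by (metis prefix_order.dual_order.strict_iff_not prefix_snoc strict_prefix_def)
  then show ?case using snoc.IH[OF vT] lt by fastforce
qed

lemma fork_lab_mono:
  assumes "is_fork w T lab" "v \<in> T" "prefix u v"
  shows "lab u \<le> lab v"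
  using fork_lab_strict[OF assms(1,2)] assms(3)
  by (metis order.order_iff_strict prefix_order.le_less)

lemma fork_len_le_lab:
  assumes "is_fork w T lab" "v \<in> T"
  shows "length v \<le> lab v"
  using assms(2)
proof (induction v rule: rev_induct)
  case Nil then show ?case by simp
next
  case (snoc a v)
  have vT: "v \<in> T" using assms(1) snoc.prems(1) unfolding is_fork_def is_tree_def by blast
  have lt: "lab v < lab (v @ [a])" using assms(1) snoc.prems(1) unfolding is_fork_def by blast
  show ?case using snoc.IH[OF vT] lt by simp
qed

lemma fork_lab_le:
  assumes "is_fork w T lab" "v \<in> T" shows "lab v \<le> length w"
  using assms unfolding is_fork_def by blast

lemma fork_tree: "is_fork w T lab \<Longrightarrow> is_tree T"
  unfolding is_fork_def by blast

lemma tree_finite: "is_tree T \<Longrightarrow> finite T" unfolding is_tree_def by blast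
lemma tree_root: "is_tree T \<Longrightarrow> [] \<in> T" unfolding is_tree_def by blast

lemma max_len_ge:
  assumes "is_tree T" "v \<in> T" shows "length v \<le> max_len T"
  unfolding max_len_def using assms tree_finite by simp

lemma max_len_ex:
  assumes "is_tree T" shows "\<exists>v\<in>T. length v = max_len T"
proof -
  have "finite (length ` T)" "length ` T \<noteq> {}" using assms tree_finite tree_root by auto
  from Max_in[OF this] show ?thesis unfolding max_len_def by auto
qed

lemma max_len_le:
  assumes "is_fork w T lab" shows "max_len T \<le> length w"
  using max_len_ex[OF fork_tree[OF assms]] fork_len_le_lab[OF assms] fork_lab_le[OF assms]
  by (metis order_trans)

lemma reserve_nonneg: "reserve w lab t \<ge> 0" unfolding reserve_def by simp

lemma reserve_le: "reserve w lab t \<le> int (length w)"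
proof -
  have "{i. adv_idx w i \<and> i > lab t} \<subseteq> {1..length w}" unfolding adv_idx_def by auto
  then have "card {i. adv_idx w i \<and> i > lab t} \<le> length w"
    by (metis card_atLeastAtMost card_mono diff_Suc_1 finite_atLeastAtMost)
  then show ?thesis unfolding reserve_def by simp
qed

lemma reach_le: "reach w T lab t \<le> reserve w lab t" if "is_tree T" "t \<in> T"
  unfolding reach_def gap_def using max_len_ge[OF that] by simp

lemma reach_ge: "reach w T lab t \<ge> - int (max_len T)"
  unfolding reach_def gap_def using reserve_nonneg[of w lab t] by simp

lemma rho_fork_props:
  assumes "is_tree T"
  shows "\<forall>t\<in>T. reach w T lab t \<le> rho_fork w T lab" "\<exists>t\<in>T. reach w T lab t = rho_fork w T lab"
proof -
  have f: "finite (reach w T lab ` T)" "reach w T lab ` T \<noteq> {}" using assms tree_finite tree_root by auto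
  show "\<forall>t\<in>T. reach w T lab t \<le> rho_fork w T lab" unfolding rho_fork_def using f by simp
  show "\<exists>t\<in>T. reach w T lab t = rho_fork w T lab" unfolding rho_fork_def using Max_in[OF f] by auto
qed

lemma rho_fork_nonneg:
  assumes "is_tree T" shows "rho_fork w T lab \<ge> 0"
proof -
  obtain v where v: "v \<in> T" "length v = max_len T" using max_len_ex[OF assms] by blast
  have "reach w T lab v \<ge> 0" unfolding reach_def gap_def using v reserve_nonneg[of w lab v] by simp
  moreover have "reach w T lab v \<le> rho_fork w T lab" using rho_fork_props(1)[OF assms] v(1) by blast
  ultimately show ?thesis by linarith
qed

lemma rho_fork_le:
  assumes "is_tree T" shows "rho_fork w T lab \<le> int (length w)"
  using rho_fork_props(2)[OF assms, of w lab] reach_le[OF assms] reserve_le by (metis order_trans)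

definition muw :: "bool list \<Rightarrow> bool list \<Rightarrow> nat list set \<Rightarrow> (nat list \<Rightarrow> nat) \<Rightarrow> int" where
  "muw w x T lab = Max {min (reach w T lab t1) (reach w T lab t2) | t1 t2.
       t1 \<in> T \<and> t2 \<in> T \<and> disjoint_over x lab t1 t2}"

lemma mu_fork_muw: "mu_fork x y T lab = muw (x @ y) x T lab"
  unfolding mu_fork_def muw_def by simp

lemma disjoint_root: "disjoint_over x lab [] []"
  unfolding disjoint_over_def by simp

lemma disjoint_sym: "disjoint_over x lab a b = disjoint_over x lab b a"
  unfolding disjoint_over_def by blast

lemma pairs_finite:
  assumes "finite T"
  shows "finite {f t1 t2 | t1 t2. t1 \<in> T \<and> t2 \<in> T \<and> P t1 t2}"
proof -
  have "{f t1 t2 | t1 t2. t1 \<in> T \<and> t2 \<in> T \<and> P t1 t2} \<subseteq> (\<lambda>(a,b). f a b) ` (T \<times> T)" by auto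
  then show ?thesis using assms finite_subset by blast
qed

lemma muw_props:
  assumes "is_tree T"
  shows "\<And>t1 t2. t1 \<in> T \<Longrightarrow> t2 \<in> T \<Longrightarrow> disjoint_over x lab t1 t2 \<Longrightarrow>
            min (reach w T lab t1) (reach w T lab t2) \<le> muw w x T lab"
    "\<exists>t1\<in>T. \<exists>t2\<in>T. disjoint_over x lab t1 t2 \<and> min (reach w T lab t1) (reach w T lab t2) = muw w x T lab"
proof -
  let ?S = "{min (reach w T lab t1) (reach w T lab t2) | t1 t2. t1 \<in> T \<and> t2 \<in> T \<and> disjoint_over x lab t1 t2}"
  have f: "finite ?S" by (rule pairs_finite[OF tree_finite[OF assms]])
  have ne: "?S \<noteq> {}" using tree_root[OF assms] disjoint_root by blast
  show "\<And>t1 t2. t1 \<in> T \<Longrightarrow> t2 \<in> T \<Longrightarrow> disjoint_over x lab t1 t2 \<Longrightarrow>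
            min (reach w T lab t1) (reach w T lab t2) \<le> muw w x T lab"
    unfolding muw_def using f by (intro Max_ge) auto
  have "Max ?S \<in> ?S" using Max_in[OF f ne] .
  then show "\<exists>t1\<in>T. \<exists>t2\<in>T. disjoint_over x lab t1 t2 \<and> min (reach w T lab t1) (reach w T lab t2) = muw w x T lab"
    unfolding muw_def by force
qed

lemma muw_bounds:
  assumes "is_fork w T lab"
  shows "muw w x T lab \<le> int (length w)" "muw w x T lab \<ge> - int (length w)"
proof -
  have tr: "is_tree T" using fork_tree[OF assms] .
  obtain t1 t2 where t: "t1 \<in> T" "t2 \<in> T" "min (reach w T lab t1) (reach w T lab t2) = muw w x T lab"
    using muw_props(2)[OF tr, where x=x and lab=lab and w=w] by blast
  have "reach w T lab t1 \<le> int (length w)" using reach_le[OF tr t(1)] reserve_le by (metis order_trans)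
  then show "muw w x T lab \<le> int (length w)" using t(3) by linarith
  have "min (reach w T lab []) (reach w T lab []) \<le> muw w x T lab"
    using muw_props(1)[OF tr tree_root[OF tr] tree_root[OF tr] disjoint_root] .
  moreover have "reach w T lab [] \<ge> - int (length w)" using reach_ge[where w=w and T=T and lab=lab and t="[]"] max_len_le[OF assms] by linarith
  ultimately show "muw w x T lab \<ge> - int (length w)" by linarith
qed

lemma str_max:
  fixes f :: "nat list set \<Rightarrow> (nat list \<Rightarrow> nat) \<Rightarrow> int"
  assumes b: "\<And>T lab. closed_fork w T lab \<Longrightarrow> f T lab \<le> int n \<and> f T lab \<ge> - int n"
    and ex: "closed_fork w T0 lab0"
  shows "\<And>T lab. closed_fork w T lab \<Longrightarrow> f T lab \<le> Max {f T lab | T lab. closed_fork w T lab}"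
    "\<exists>T lab. closed_fork w T lab \<and> f T lab = Max {f T lab | T lab. closed_fork w T lab}"
proof -
  let ?S = "{f T lab | T lab. closed_fork w T lab}"
  have "?S \<subseteq> {- int n .. int n}" using b by fastforce
  then have fin: "finite ?S" using finite_subset by blast
  have ne: "?S \<noteq> {}" using ex by blast
  show "\<And>T lab. closed_fork w T lab \<Longrightarrow> f T lab \<le> Max ?S"
  proof -
    fix T lab assume "closed_fork w T lab"
    then have "f T lab \<in> ?S" by blast
    then show "f T lab \<le> Max ?S" using Max_ge[OF fin] by blast
  qed
  have "Max ?S \<in> ?S" using Max_in[OF fin ne] .
  then obtain T lab where "closed_fork w T lab" "Max ?S = f T lab" by blast
  then show "\<exists>T lab. closed_fork w T lab \<and> f T lab = Max ?S" by (intro exI[of _ T] exI[of _ lab]) simp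
qed


lemma honest_snoc: "honest_idx (w @ [b]) i \<longleftrightarrow> honest_idx w i \<or> (i = Suc (length w) \<and> \<not> b)"
  unfolding honest_idx_def by (cases "i \<le> length w") (auto simp: nth_append)

lemma adv_snoc: "adv_idx (w @ [b]) i \<longleftrightarrow> adv_idx w i \<or> (i = Suc (length w) \<and> b)"
  unfolding adv_idx_def by (cases "i \<le> length w") (auto simp: nth_append)

lemma honest_le: "honest_idx w i \<Longrightarrow> i \<le> length w" unfolding honest_idx_def by simp
lemma adv_le: "adv_idx w i \<Longrightarrow> i \<le> length w" unfolding adv_idx_def by simp
lemma honest_not_adv: "honest_idx w i \<Longrightarrow> \<not> adv_idx w i" unfolding honest_idx_def adv_idx_def by simp

lemma closed_true_labels:
  assumes "closed_fork (w @ [True]) T lab" "v \<in> T"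
  shows "lab v \<le> length w"
proof (rule ccontr)
  assume "\<not> lab v \<le> length w"
  moreover have "lab v \<le> length (w @ [True])" using assms unfolding closed_fork_def is_fork_def by blast
  ultimately have eq: "lab v = Suc (length w)" by simp
  have "is_leaf T v"
  proof -
    have "v @ [k] \<notin> T" for k
    proof
      assume "v @ [k] \<in> T"
      then have "lab v < lab (v @ [k])" "lab (v @ [k]) \<le> length (w @ [True])"
        using assms unfolding closed_fork_def is_fork_def by blast+
      then show False using eq by simp
    qed
    then show ?thesis unfolding is_leaf_def using assms(2) by blast
  qed
  then have "honest_vertex (w @ [True]) lab v" using assms(1) unfolding closed_fork_def by blast
  moreover have "lab [] = 0" using assms(1) unfolding closed_fork_def is_fork_def by blast
  ultimately show False using eq unfolding honest_vertex_def
    by (auto simp: honest_snoc dest: honest_le)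
qed

lemma closed_true:
  "closed_fork (w @ [True]) T lab \<longleftrightarrow> closed_fork w T lab"
proof
  assume c: "closed_fork (w @ [True]) T lab"
  have L: "\<forall>v\<in>T. lab v \<le> length w" using closed_true_labels[OF c] by blast
  show "closed_fork w T lab"
    using c L unfolding closed_fork_def is_fork_def honest_vertex_def
    by (simp add: honest_snoc)
next
  assume c: "closed_fork w T lab"
  then show "closed_fork (w @ [True]) T lab"
    unfolding closed_fork_def is_fork_def honest_vertex_def
    by (auto simp: honest_snoc dest: honest_le)
qed

lemma reserve_true:
  assumes "lab t \<le> length w"
  shows "reserve (w @ [True]) lab t = reserve w lab t + 1"
proof -
  have "{i. adv_idx (w @ [True]) i \<and> i > lab t} = insert (Suc (length w)) {i. adv_idx w i \<and> i > lab t}"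
    using assms by (auto simp: adv_snoc)
  moreover have "Suc (length w) \<notin> {i. adv_idx w i \<and> i > lab t}" by (auto dest: adv_le)
  moreover have "finite {i. adv_idx w i \<and> i > lab t}"
    by (rule finite_subset[of _ "{..length w}"]) (auto dest: adv_le)
  ultimately show ?thesis unfolding reserve_def by simp
qed

lemma reach_true:
  assumes "closed_fork w T lab" "t \<in> T"
  shows "reach (w @ [True]) T lab t = reach w T lab t + 1"
proof -
  have "lab t \<le> length w" using assms fork_lab_le unfolding closed_fork_def by blast
  then show ?thesis using reserve_true unfolding reach_def by simp
qed

lemma Max_plus1:
  fixes S :: "int set"
  assumes "finite S" "S \<noteq> {}"
  shows "Max ((\<lambda>a. a + 1) ` S) = Max S + 1"
  using mono_Max_commute[of "\<lambda>a::int. a + 1" S] assms by (simp add: mono_def)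

lemma rho_fork_true:
  assumes "closed_fork w T lab"
  shows "rho_fork (w @ [True]) T lab = rho_fork w T lab + 1"
proof -
  have tr: "is_tree T" using assms unfolding closed_fork_def using fork_tree by blast
  have "reach (w @ [True]) T lab ` T = (\<lambda>a. a + 1) ` reach w T lab ` T"
    using reach_true[OF assms] by (auto simp: image_iff)
  then show ?thesis unfolding rho_fork_def
    using tree_finite[OF tr] tree_root[OF tr] Max_plus1[of "reach w T lab ` T"]
    by (metis empty_iff finite_imageI image_is_empty)
qed

lemma muw_true:
  assumes "closed_fork w T lab"
  shows "muw (w @ [True]) x T lab = muw w x T lab + 1"
proof -
  have tr: "is_tree T" using assms unfolding closed_fork_def using fork_tree by blast
  let ?S = "{min (reach w T lab t1) (reach w T lab t2) | t1 t2.
       t1 \<in> T \<and> t2 \<in> T \<and> disjoint_over x lab t1 t2}"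
  let ?S' = "{min (reach (w @ [True]) T lab t1) (reach (w @ [True]) T lab t2) | t1 t2.
       t1 \<in> T \<and> t2 \<in> T \<and> disjoint_over x lab t1 t2}"
  have "?S' = (\<lambda>a. a + 1) ` ?S"
  proof (intro equalityI subsetI)
    fix z assume "z \<in> ?S'"
    then obtain t1 t2 where "z = min (reach (w @ [True]) T lab t1) (reach (w @ [True]) T lab t2)"
      "t1 \<in> T" "t2 \<in> T" "disjoint_over x lab t1 t2" by blast
    then have "z = min (reach w T lab t1) (reach w T lab t2) + 1" using reach_true[OF assms] by simp
    then show "z \<in> (\<lambda>a. a + 1) ` ?S"
      using \<open>t1 \<in> T\<close> \<open>t2 \<in> T\<close> \<open>disjoint_over x lab t1 t2\<close> by blast
  next
    fix z assume "z \<in> (\<lambda>a. a + 1) ` ?S"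
    then obtain t1 t2 where "z = min (reach w T lab t1) (reach w T lab t2) + 1"
      "t1 \<in> T" "t2 \<in> T" "disjoint_over x lab t1 t2" by blast
    then have "z = min (reach (w @ [True]) T lab t1) (reach (w @ [True]) T lab t2)"
      using reach_true[OF assms] by simp
    then show "z \<in> ?S'" using \<open>t1 \<in> T\<close> \<open>t2 \<in> T\<close> \<open>disjoint_over x lab t1 t2\<close> by blast
  qed
  moreover have "finite ?S" by (rule pairs_finite[OF tree_finite[OF tr]])
  moreover have "?S \<noteq> {}" using tree_root[OF tr] disjoint_root by blast
  ultimately show ?thesis unfolding muw_def using Max_plus1 by simp
qed



lemma new_child:
  fixes t :: "nat list"
  assumes "finite T" shows "\<exists>k. t @ [k] \<notin> T"
proof -
  have "finite ((\<lambda>k. t @ [k]) -` T)" using assms by (rule finite_vimageI) (simp add: inj_def)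
  moreover have "(\<lambda>k. t @ [k]) -` T \<noteq> UNIV"
  proof
    assume "(\<lambda>k. t @ [k]) -` T = UNIV"
    with calculation have "finite (UNIV :: nat set)" by simp
    then show False by simp
  qed
  ultimately show ?thesis by auto
qed

lemma rep_snoc: "t @ k # replicate (Suc j) (0::nat) = (t @ k # replicate j 0) @ [0]"
  by (simp add: replicate_append_same)

lemma extend:
  assumes c: "closed_fork w T lab" and tT: "t \<in> T" and r: "reach w T lab t \<ge> 0"
  shows "\<exists>T' lab'. closed_fork (w @ [False]) T' lab' \<and> T \<subseteq> T' \<and> (\<forall>s\<in>T. lab' s = lab s)
     \<and> max_len T' = Suc (max_len T)
     \<and> (\<exists>v\<in>T'. reach (w @ [False]) T' lab' v = 0 \<and> (\<forall>u. prefix u v \<longrightarrow> u \<in> T \<longrightarrow> prefix u t))"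
proof -
  have fk: "is_fork w T lab" using c unfolding closed_fork_def by blast
  have tr: "is_tree T" using fork_tree[OF fk] .
  define n where "n = length w"
  define l where "l = max_len T"
  define g where "g = l - length t"
  define A where "A = {i. adv_idx w i \<and> i > lab t}"
  define as where "as = sorted_list_of_set A"
  have finA: "finite A" unfolding A_def by (rule finite_subset[of _ "{..length w}"]) (auto dest: adv_le)
  have lt: "length t \<le> l" unfolding l_def using max_len_ge[OF tr tT] .
  have "int (card A) - (int l - int (length t)) \<ge> 0"
    using r unfolding reach_def reserve_def gap_def A_def l_def by simp
  then have gA: "g \<le> length as" unfolding as_def g_def using lt by (simp add: finA)
  have setas: "set as = A" unfolding as_def using finA by simp
  have sas: "sorted_wrt (<) as" unfolding as_def by (rule strict_sorted_list_of_set)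
  have asA: "as ! j \<in> A" if "j < g" for j using that gA setas nth_mem by fastforce
  have asadv: "adv_idx w (as ! j)" "as ! j > lab t" "as ! j \<le> n" if "j < g" for j
    using asA[OF that] unfolding A_def n_def by (auto dest: adv_le)
  have asmono: "as ! j < as ! j'" if "j < j'" "j' < g" for j j'
    using sas that gA by (simp add: sorted_wrt_iff_nth_less)
  obtain k where k: "t @ [k] \<notin> T" using new_child[OF tree_finite[OF tr]] by blast
  define p where "p j = t @ k # replicate j 0" for j
  have pT: "p j \<notin> T" for j
  proof
    assume "p j \<in> T"
    moreover have "prefix (t @ [k]) (p j)" unfolding p_def by simp
    ultimately show False using tree_prefix[OF tr] k by blast
  qed
  have plen: "length (p j) = Suc (length t + j)" for j unfolding p_def by simp
  have pSuc: "p (Suc j) = p j @ [0]" for j unfolding p_def by (rule rep_snoc)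
  define N where "N = p ` {..g}"
  define T' where "T' = T \<union> N"
  define lab' where "lab' u = (if u \<in> T then lab u else
      (if length u - Suc (length t) < g then as ! (length u - Suc (length t)) else Suc n))" for u
  have lp: "lab' (p j) = (if j < g then as ! j else Suc n)" for j
    unfolding lab'_def using pT[of j] plen[of j] by simp
  have labT: "lab' s = lab s" if "s \<in> T" for s unfolding lab'_def using that by simp
  have labTn: "lab s \<le> n" if "s \<in> T" for s using fork_lab_le[OF fk that] unfolding n_def .
  have snoc_cases: "(j = 0 \<and> u = t) \<or> (\<exists>j'. j = Suc j' \<and> u = p j')" if "u @ [k'] = p j" for u k' j
  proof (cases j)
    case 0 then show ?thesis using that unfolding p_def by simp
  next
    case (Suc j') then show ?thesis using that pSuc by simp
  qed
  have trT': "is_tree T'"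
    unfolding is_tree_def
  proof (intro conjI allI impI)
    show "finite T'" unfolding T'_def N_def using tree_finite[OF tr] by simp
    show "[] \<in> T'" unfolding T'_def using tree_root[OF tr] by simp
    fix v k' assume a: "v @ [k'] \<in> T'"
    show "v \<in> T'"
    proof (cases "v @ [k'] \<in> T")
      case True then show ?thesis using tr unfolding is_tree_def T'_def by blast
    next
      case False
      then obtain j where j: "j \<le> g" "v @ [k'] = p j" using a unfolding T'_def N_def by auto
      from snoc_cases[OF j(2)] show ?thesis using j(1) tT unfolding T'_def N_def by auto
    qed
  qed
  have memT': "u \<in> T' \<longleftrightarrow> u \<in> T \<or> (\<exists>j\<le>g. u = p j)" for u unfolding T'_def N_def by auto
  have hon_new: "honest_idx (w @ [False]) (lab' (p j)) \<Longrightarrow> j = g" if "j \<le> g" for j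
    using that asadv(1)[of j] lp[of j] adv_le[of w "Suc (length w)"]
    by (auto simp: honest_snoc n_def dest: honest_not_adv split: if_splits)
  have fk': "is_fork (w @ [False]) T' lab'"
    unfolding is_fork_def
  proof (intro conjI ballI allI impI)
    show "is_tree T'" by (rule trT')
  next
    fix v assume vT: "v \<in> T'"
    have "lab' v \<le> Suc n"
    proof (cases "v \<in> T")
      case True then show ?thesis using labT labTn by fastforce
    next
      case False
      then obtain j where "v = p j" using vT unfolding memT' by auto
      then show ?thesis using lp[of j] asadv(3)[of j] by (cases "j < g") auto
    qed
    then show "lab' v \<le> length (w @ [False])" by (simp add: n_def)
  next
    show "lab' [] = 0" using labT tree_root[OF tr] fk unfolding is_fork_def by simp
  next
    fix v k' assume a: "v @ [k'] \<in> T'"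
    show "lab' v < lab' (v @ [k'])"
    proof (cases "v @ [k'] \<in> T")
      case True
      then have "v \<in> T" using tr unfolding is_tree_def by blast
      then show ?thesis using True labT fk unfolding is_fork_def by simp
    next
      case False
      then obtain j where j: "j \<le> g" "v @ [k'] = p j" using a unfolding memT' by auto
      from snoc_cases[OF j(2)] show ?thesis
      proof
        assume "j = 0 \<and> v = t"
        then show ?thesis using j lp[of 0] labT[OF tT] asadv(2)[of 0] labTn[OF tT] by auto
      next
        assume "\<exists>j'. j = Suc j' \<and> v = p j'"
        then obtain j' where "j = Suc j'" "v = p j'" by blast
        then show ?thesis using j lp[of j'] lp[of j] asmono[of j' j] asadv(3)[of j'] by auto
      qed
    qed
  next
    fix i assume hi: "honest_idx (w @ [False]) i"
    show "card {v \<in> T'. lab' v = i} = 1"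
    proof (cases "honest_idx w i")
      case True
      have "{v \<in> T'. lab' v = i} = {v \<in> T. lab v = i}"
      proof -
        have "lab' (p j) \<noteq> i" if "j \<le> g" for j
          using True lp[of j] asadv(1)[of j] honest_le[OF True]
          by (auto simp: n_def dest: honest_not_adv)
        then show ?thesis unfolding memT' using labT by auto
      qed
      then show ?thesis using True fk unfolding is_fork_def by simp
    next
      case False
      then have iS: "i = Suc n" using hi by (simp add: honest_snoc n_def)
      have "{v \<in> T'. lab' v = i} = {p g}"
      proof -
        have "lab' (p j) \<noteq> i" if "j < g" for j using that lp[of j] asadv(3)[of j] iS by simp
        moreover have "lab' s \<noteq> i" if "s \<in> T" for s using that labT labTn iS by fastforce
        ultimately show ?thesis unfolding memT' using lp[of g] iS by (auto simp: le_less)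
      qed
      then show ?thesis by simp
    qed
  next
    fix u v assume uT: "u \<in> T'" and vT: "v \<in> T'"
      and h: "honest_idx (w @ [False]) (lab' u) \<and> honest_idx (w @ [False]) (lab' v) \<and> lab' u < lab' v"
    show "length u < length v"
    proof (cases "v \<in> T")
      case True
      then have lv: "lab' v \<le> n" using labT labTn by simp
      show ?thesis
      proof (cases "u \<in> T")
        case True
        have "honest_idx w (lab u)" "honest_idx w (lab v)" using h lv labT[OF True] labT[OF \<open>v \<in> T\<close>]
          by (auto simp: honest_snoc n_def)
        then show ?thesis using h True \<open>v \<in> T\<close> labT fk unfolding is_fork_def by auto
      next
        case False
        then obtain j where "j \<le> g" "u = p j" using uT unfolding memT' by auto
        then have "j = g" using hon_new h by blast
        then show ?thesis using h lv lp \<open>u = p j\<close> by simp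
      qed
    next
      case False
      then obtain j where j: "j \<le> g" "v = p j" using vT unfolding memT' by auto
      then have "j = g" using hon_new h by blast
      then have lenv: "length v = Suc l" using j plen lt unfolding g_def by simp
      show ?thesis
      proof (cases "u \<in> T")
        case True
        then show ?thesis using lenv max_len_ge[OF tr True] unfolding l_def by simp
      next
        case False
        then obtain j' where "j' \<le> g" "u = p j'" using uT unfolding memT' by auto
        then have "j' = g" using hon_new h by blast
        then show ?thesis using h \<open>u = p j'\<close> j \<open>j = g\<close> by simp
      qed
    qed
  qed
  have cl': "closed_fork (w @ [False]) T' lab'"
    unfolding closed_fork_def
  proof (intro conjI allI impI)
    show "is_fork (w @ [False]) T' lab'" by (rule fk')
    fix v assume lf: "is_leaf T' v"
    then have vT: "v \<in> T'" unfolding is_leaf_def by blast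
    show "honest_vertex (w @ [False]) lab' v"
    proof (cases "v \<in> T")
      case True
      then have "is_leaf T v" using lf unfolding is_leaf_def T'_def by blast
      then have "honest_vertex w lab v" using c unfolding closed_fork_def by blast
      then show ?thesis using labT[OF True] unfolding honest_vertex_def by (auto simp: honest_snoc)
    next
      case False
      then obtain j where j: "j \<le> g" "v = p j" using vT unfolding memT' by auto
      show ?thesis
      proof (cases "j < g")
        case True
        have "v @ [0] = p (Suc j)" using j pSuc[of j] by simp
        then have "v @ [0] \<in> T'" unfolding memT' using True Suc_leI by blast
        then show ?thesis using lf unfolding is_leaf_def by blast
      next
        case False
        then show ?thesis using j lp[of j] unfolding honest_vertex_def by (simp add: honest_snoc n_def)
      qed
    qed
  qed
  have ml: "max_len T' = Suc l"
  proof (rule antisym)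
    obtain u where "u \<in> T'" "length u = max_len T'" using max_len_ex[OF trT'] by blast
    moreover have "length u \<le> Suc l" if "u \<in> T'" for u
      using that max_len_ge[OF tr] plen lt unfolding memT' l_def g_def by fastforce
    ultimately show "max_len T' \<le> Suc l" by metis
    have "p g \<in> T'" unfolding memT' by auto
    then show "Suc l \<le> max_len T'" using max_len_ge[OF trT'] plen[of g] lt unfolding g_def by fastforce
  qed
  have rv: "reach (w @ [False]) T' lab' (p g) = 0"
  proof -
    have "{i. adv_idx (w @ [False]) i \<and> i > lab' (p g)} = {}"
      using lp[of g] by (auto dest: adv_le simp: n_def)
    then have "reserve (w @ [False]) lab' (p g) = 0" unfolding reserve_def by (metis card.empty of_nat_0)
    moreover have "gap T' (p g) = 0" unfolding gap_def using ml plen[of g] lt unfolding g_def by simp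
    ultimately show ?thesis unfolding reach_def by simp
  qed
  have pref: "prefix u t" if "prefix u (p g)" "u \<in> T" for u
  proof -
    from that(1) have "prefix u t \<or> (\<exists>zs. u = t @ zs \<and> prefix zs (k # replicate g 0))"
      unfolding p_def by (simp add: prefix_append)
    then show ?thesis
    proof
      assume "\<exists>zs. u = t @ zs \<and> prefix zs (k # replicate g 0)"
      then obtain zs where zs: "u = t @ zs" "prefix zs (k # replicate g 0)" by blast
      show ?thesis
      proof (cases zs)
        case Nil then show ?thesis using zs by simp
      next
        case (Cons a zs')
        then have "a = k" using zs by simp
        then have "prefix (t @ [k]) u" using zs Cons by simp
        then show ?thesis using tree_prefix[OF tr that(2)] k by blast
      qed
    qed simp
  qed
  show ?thesis
    apply (rule exI[of _ T'], rule exI[of _ lab'])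
    using cl' labT ml rv pref unfolding l_def T'_def N_def
    by (auto intro!: bexI[of _ "p g"])
qed



lemma reserve_step:
  assumes "adv_idx w (lab s)" "lab u < lab s"
  shows "reserve w lab s + 1 \<le> reserve w lab u"
proof -
  have fin: "finite {i. adv_idx w i \<and> i > lab u}"
    by (rule finite_subset[of _ "{..length w}"]) (auto dest: adv_le)
  have "insert (lab s) {i. adv_idx w i \<and> i > lab s} \<subseteq> {i. adv_idx w i \<and> i > lab u}"
    using assms by auto
  then have "card (insert (lab s) {i. adv_idx w i \<and> i > lab s}) \<le> card {i. adv_idx w i \<and> i > lab u}"
    using fin by (rule card_mono[rotated])
  moreover have "finite {i. adv_idx w i \<and> i > lab s}"
    by (rule finite_subset[of _ "{..length w}"]) (auto dest: adv_le)
  ultimately show ?thesis unfolding reserve_def by simp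
qed

lemma reserve_false: "reserve (w @ [False]) lab s = reserve w lab s"
  unfolding reserve_def by (simp add: adv_snoc)

lemma strict_prefix_snoc_ex:
  assumes "strict_prefix u h" shows "\<exists>a. prefix (u @ [a]) h"
proof -
  obtain zs where "h = u @ zs" "zs \<noteq> []" using assms
    by (metis prefixE prefix_order.less_le self_append_conv)
  then show ?thesis by (cases zs) auto
qed

lemma restrict:
  assumes c': "closed_fork (w @ [False]) T' lab"
  shows "\<exists>T. closed_fork w T lab \<and> T \<subseteq> T' \<and>
     (\<exists>v\<in>T'. lab v = Suc (length w) \<and> reach (w @ [False]) T' lab v \<le> 0 \<and>
        (\<forall>s\<in>T'. s \<noteq> v \<longrightarrow> (\<exists>h\<in>T. prefix h s \<and> reach (w @ [False]) T' lab s \<le> reach w T lab h - 1)) \<and>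
        (\<exists>h\<in>T. prefix h v \<and> reach w T lab h \<ge> 0))"
proof -
  define n where "n = length w"
  have fk': "is_fork (w @ [False]) T' lab" using c' unfolding closed_fork_def by blast
  have tr': "is_tree T'" using fork_tree[OF fk'] .
  have lab0: "lab [] = 0" using fk' unfolding is_fork_def by blast
  have "honest_idx (w @ [False]) (Suc n)" by (simp add: honest_snoc n_def)
  then have "card {v \<in> T'. lab v = Suc n} = 1" using fk' unfolding is_fork_def by blast
  then obtain v where vset: "{v \<in> T'. lab v = Suc n} = {v}" by (rule card_1_singletonE)
  have vT': "v \<in> T'" and labv: "lab v = Suc n" using vset by auto
  have vuniq: "s = v" if "s \<in> T'" "lab s = Suc n" for s using vset that by auto
  have vne: "v \<noteq> []" using labv lab0 by auto
  define T where "T = {u \<in> T'. \<exists>h\<in>T'. prefix u h \<and> honest_vertex w lab h}"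
  have TT': "T \<subseteq> T'" unfolding T_def by blast
  have honT: "h \<in> T" if "h \<in> T'" "honest_vertex w lab h" for h unfolding T_def using that by blast
  have hon_lt_v: "length h < length v" if "h \<in> T'" "honest_vertex w lab h" for h
  proof (cases "h = []")
    case True then show ?thesis using vne by simp
  next
    case False
    then have hi: "honest_idx w (lab h)" using that unfolding honest_vertex_def by simp
    then have "lab h < lab v" using labv honest_le unfolding n_def by fastforce
    moreover have "honest_idx (w @ [False]) (lab h)" "honest_idx (w @ [False]) (lab v)"
      using hi labv by (auto simp: honest_snoc n_def)
    ultimately show ?thesis using fk' that(1) vT' unfolding is_fork_def by blast
  qed
  have Tlen: "length u < length v" if uT: "u \<in> T" for u
  proof -
    obtain h where "h \<in> T'" "prefix u h" "honest_vertex w lab h" using uT unfolding T_def by blast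
    then show ?thesis using hon_lt_v prefix_length_le by fastforce
  qed
  have Tlab: "lab u \<le> n" if uT: "u \<in> T" for u
  proof -
    obtain h where h: "h \<in> T'" "prefix u h" "honest_vertex w lab h" using uT unfolding T_def by blast
    show ?thesis
    proof (cases "h = []")
      case True then show ?thesis using h lab0 by simp
    next
      case False
      then have "lab h \<le> n" using h honest_le unfolding honest_vertex_def n_def by blast
      then show ?thesis using fork_lab_mono[OF fk' h(1,2)] by simp
    qed
  qed
  have trT: "is_tree T"
    unfolding is_tree_def
  proof (intro conjI allI impI)
    show "finite T" using tree_finite[OF tr'] TT' finite_subset by blast
    show "[] \<in> T" using honT[OF tree_root[OF tr']] unfolding honest_vertex_def by simp
    fix u k assume a: "u @ [k] \<in> T"
    then obtain h where h: "h \<in> T'" "prefix (u @ [k]) h" "honest_vertex w lab h" unfolding T_def by blast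
    have "u \<in> T'" using a TT' tr' unfolding is_tree_def by blast
    moreover have "prefix u h" using h(2) prefix_order.trans by (metis prefix_snoc prefix_order.order_refl)
    ultimately show "u \<in> T" unfolding T_def using h by blast
  qed
  have fk: "is_fork w T lab"
    unfolding is_fork_def
  proof (intro conjI ballI allI impI)
    show "is_tree T" by (rule trT)
    fix u assume "u \<in> T" then show "lab u \<le> length w" using Tlab unfolding n_def by blast
  next
    show "lab [] = 0" by (rule lab0)
  next
    fix u k assume "u @ [k] \<in> T" then show "lab u < lab (u @ [k])" using TT' fk' unfolding is_fork_def by blast
  next
    fix i assume hi: "honest_idx w i"
    have "{u \<in> T. lab u = i} = {u \<in> T'. lab u = i}"
      using TT' honT hi unfolding honest_vertex_def by auto
    moreover have "honest_idx (w @ [False]) i" using hi by (simp add: honest_snoc)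
    ultimately show "card {u \<in> T. lab u = i} = 1" using fk' unfolding is_fork_def by simp
  next
    fix u u' assume "u \<in> T" "u' \<in> T" "honest_idx w (lab u) \<and> honest_idx w (lab u') \<and> lab u < lab u'"
    moreover have "\<forall>u\<in>T'. \<forall>v\<in>T'. honest_idx (w @ [False]) (lab u) \<and> honest_idx (w @ [False]) (lab v) \<and> lab u < lab v
           \<longrightarrow> length u < length v" using fk' unfolding is_fork_def by blast
    ultimately show "length u < length u'" using TT' by (auto simp: honest_snoc)
  qed
  have cl: "closed_fork w T lab"
    unfolding closed_fork_def
  proof (intro conjI allI impI)
    show "is_fork w T lab" by (rule fk)
    fix u assume lf: "is_leaf T u"
    then have uT: "u \<in> T" unfolding is_leaf_def by blast
    then obtain h where h: "h \<in> T'" "prefix u h" "honest_vertex w lab h" unfolding T_def by blast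
    show "honest_vertex w lab u"
    proof (cases "u = h")
      case True then show ?thesis using h by simp
    next
      case False
      then have "strict_prefix u h" using h(2) by (simp add: strict_prefix_def)
      then obtain a where a: "prefix (u @ [a]) h" using strict_prefix_snoc_ex by blast
      then have "u @ [a] \<in> T" unfolding T_def using h tree_prefix[OF tr'] by blast
      then show ?thesis using lf unfolding is_leaf_def by blast
    qed
  qed
  define l where "l = max_len T"
  define L where "L = max_len T'"
  have lv: "l < length v" unfolding l_def using max_len_ex[OF trT] Tlen by fastforce
  have vL: "length v \<le> L" unfolding L_def using max_len_ge[OF tr' vT'] .
  define R where "R s = reserve w lab s" for s
  have chain: "\<exists>h\<in>T. prefix h s \<and> R s + int (length s) \<le> R h + int (length h)"
    if "s \<in> T'" "s \<noteq> v" for s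
    using that
  proof (induction s rule: rev_induct)
    case Nil then show ?case using trT tree_root by fastforce
  next
    case (snoc a u)
    have uT': "u \<in> T'" using snoc.prems(1) tr' unfolding is_tree_def by blast
    have lt: "lab u < lab (u @ [a])" using snoc.prems(1) fk' unfolding is_fork_def by blast
    have le: "lab (u @ [a]) \<le> Suc n" using snoc.prems(1) fk' unfolding is_fork_def n_def by simp
    have uv: "u \<noteq> v" using lt le labv by auto
    obtain h where h: "h \<in> T" "prefix h u" "R u + int (length u) \<le> R h + int (length h)"
      using snoc.IH[OF uT' uv] by blast
    show ?case
    proof (cases "u @ [a] \<in> T")
      case True then show ?thesis by blast
    next
      case False
      then have "\<not> honest_idx w (lab (u @ [a]))" using honT snoc.prems(1) unfolding honest_vertex_def by blast
      moreover have "lab (u @ [a]) \<noteq> Suc n" using vuniq snoc.prems by blast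
      ultimately have "adv_idx w (lab (u @ [a]))" using lt le unfolding honest_idx_def adv_idx_def n_def by auto
      then have "R (u @ [a]) + 1 \<le> R u" unfolding R_def using reserve_step lt by blast
      then show ?thesis using h by (intro bexI[of _ h]) auto
    qed
  qed
  have reach'_eq: "reach (w @ [False]) T' lab s = R s + int (length s) - int L" for s
    unfolding reach_def gap_def R_def L_def reserve_false by simp
  have reach_eq: "reach w T lab s = R s + int (length s) - int l" for s
    unfolding reach_def gap_def R_def l_def by simp
  have P1: "\<forall>s\<in>T'. s \<noteq> v \<longrightarrow> (\<exists>h\<in>T. prefix h s \<and> reach (w @ [False]) T' lab s \<le> reach w T lab h - 1)"
  proof (intro ballI impI)
    fix s assume "s \<in> T'" "s \<noteq> v"
    then obtain h where "h \<in> T" "prefix h s" "R s + int (length s) \<le> R h + int (length h)" using chain by blast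
    then show "\<exists>h\<in>T. prefix h s \<and> reach (w @ [False]) T' lab s \<le> reach w T lab h - 1"
      using lv vL reach'_eq reach_eq by (intro bexI[of _ h]) auto
  qed
  have P2: "\<exists>h\<in>T. prefix h v \<and> reach w T lab h \<ge> 0"
  proof -
    obtain u a where ua: "v = u @ [a]" using vne by (metis rev_exhaust)
    have uT': "u \<in> T'" using vT' ua tr' unfolding is_tree_def by blast
    have "u \<noteq> v" using ua by simp
    then obtain h where h: "h \<in> T" "prefix h u" "R u + int (length u) \<le> R h + int (length h)"
      using chain[OF uT'] by blast
    have "R u \<ge> 0" unfolding R_def by (rule reserve_nonneg)
    then have "reach w T lab h \<ge> 0" using h(3) lv ua reach_eq[of h] by simp
    moreover have "prefix h v" using h(2) ua by (metis prefix_order.trans prefix_append)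
    ultimately show ?thesis using h(1) by blast
  qed
  have P3: "reach (w @ [False]) T' lab v \<le> 0"
  proof -
    have "{i. adv_idx (w @ [False]) i \<and> i > lab v} = {}" using labv by (auto dest: adv_le simp: n_def)
    then have "reserve (w @ [False]) lab v = 0" unfolding reserve_def by (metis card.empty of_nat_0)
    then show ?thesis unfolding reach_def gap_def using vL unfolding L_def by simp
  qed
  show ?thesis using cl TT' vT' labv P1 P2 P3 unfolding n_def by blast
qed



lemma disj_mono:
  assumes "prefix h1 t1" "prefix h2 t2" "disjoint_over x lab t1 t2"
  shows "disjoint_over x lab h1 h2"
  using assms unfolding disjoint_over_def by (meson prefix_order.trans)

lemma disj_agree:
  assumes "is_tree T" "s1 \<in> T" "s2 \<in> T" "\<forall>s\<in>T. lab' s = lab s"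
  shows "disjoint_over x lab' s1 s2 = disjoint_over x lab s1 s2"
proof -
  have "lab' u = lab u" if "prefix u s1" for u using assms tree_prefix that by blast
  then show ?thesis unfolding disjoint_over_def by metis
qed

lemma disj_triangle:
  assumes "disjoint_over x lab t1 t2"
  shows "disjoint_over x lab t1 s \<or> disjoint_over x lab t2 s"
proof (rule ccontr)
  assume "\<not> ?thesis"
  then obtain u1 u2 where u1: "u1 \<noteq> []" "prefix u1 t1" "prefix u1 s" "lab u1 > length x"
    and u2: "u2 \<noteq> []" "prefix u2 t2" "prefix u2 s" "lab u2 > length x"
    unfolding disjoint_over_def by blast
  from u1(3) u2(3) have "prefix u1 u2 \<or> prefix u2 u1" using prefix_same_cases by blast
  then show False
  proof
    assume "prefix u1 u2"
    then have "prefix u1 t2" using u2(2) prefix_order.trans by blast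
    then show False using assms u1 unfolding disjoint_over_def by blast
  next
    assume "prefix u2 u1"
    then have "prefix u2 t1" using u1(2) prefix_order.trans by blast
    then show False using assms u2 unfolding disjoint_over_def by blast
  qed
qed

lemma closed_ex: "\<exists>T lab. closed_fork w T lab"
proof (induction w rule: rev_induct)
  case Nil
  have "closed_fork [] {[]} (\<lambda>_. 0)"
    unfolding closed_fork_def is_fork_def is_tree_def honest_vertex_def honest_idx_def is_leaf_def
    by auto
  then show ?case by blast
next
  case (snoc b w)
  then obtain T lab where c: "closed_fork w T lab" by blast
  show ?case
  proof (cases b)
    case True then have "closed_fork (w @ [b]) T lab" using c closed_true[of w T lab] by simp
    then show ?thesis by blast
  next
    case False
    have tr: "is_tree T" using c fork_tree unfolding closed_fork_def by blast
    obtain t where t: "t \<in> T" "reach w T lab t = rho_fork w T lab" using rho_fork_props(2)[OF tr] by blast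
    have "reach w T lab t \<ge> 0" using t rho_fork_nonneg[OF tr] by simp
    from extend[OF c t(1) this] obtain T' lab' where "closed_fork (w @ [False]) T' lab'" by blast
    then have "closed_fork (w @ [b]) T' lab'" using False by simp
    then show ?thesis by blast
  qed
qed

lemma rho_str_props:
  shows "\<And>T lab. closed_fork w T lab \<Longrightarrow> rho_fork w T lab \<le> rho_str w"
    "\<exists>T lab. closed_fork w T lab \<and> rho_fork w T lab = rho_str w"
proof -
  obtain T0 lab0 where c0: "closed_fork w T0 lab0" using closed_ex by blast
  have b: "rho_fork w T lab \<le> int (length w) \<and> rho_fork w T lab \<ge> - int (length w)"
    if "closed_fork w T lab" for T lab
  proof -
    have tr: "is_tree T" using that fork_tree unfolding closed_fork_def by blast
    show ?thesis using rho_fork_le[OF tr] rho_fork_nonneg[OF tr, of w lab] by simp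
  qed
  note m = str_max[where f = "rho_fork w", OF b c0]
  show "\<And>T lab. closed_fork w T lab \<Longrightarrow> rho_fork w T lab \<le> rho_str w"
    using m(1) unfolding rho_str_def by blast
  show "\<exists>T lab. closed_fork w T lab \<and> rho_fork w T lab = rho_str w"
    using m(2) unfolding rho_str_def by blast
qed

lemma mu_str_props:
  shows "\<And>T lab. closed_fork (x @ y) T lab \<Longrightarrow> mu_fork x y T lab \<le> mu_str x y"
    "\<exists>T lab. closed_fork (x @ y) T lab \<and> mu_fork x y T lab = mu_str x y"
proof -
  obtain T0 lab0 where c0: "closed_fork (x @ y) T0 lab0" using closed_ex by blast
  have b: "mu_fork x y T lab \<le> int (length (x @ y)) \<and> mu_fork x y T lab \<ge> - int (length (x @ y))"
    if "closed_fork (x @ y) T lab" for T lab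
  proof -
    have fk: "is_fork (x @ y) T lab" using that unfolding closed_fork_def by blast
    show ?thesis unfolding mu_fork_muw using muw_bounds[OF fk, of x] by simp
  qed
  note m = str_max[where f = "mu_fork x y", OF b c0]
  show "\<And>T lab. closed_fork (x @ y) T lab \<Longrightarrow> mu_fork x y T lab \<le> mu_str x y"
    using m(1) unfolding mu_str_def by blast
  show "\<exists>T lab. closed_fork (x @ y) T lab \<and> mu_fork x y T lab = mu_str x y"
    using m(2) unfolding mu_str_def by blast
qed

lemma rho_str_nonneg: "rho_str w \<ge> 0"
proof -
  obtain T lab where "closed_fork w T lab" "rho_fork w T lab = rho_str w" using rho_str_props(2) by blast
  then show ?thesis using rho_fork_nonneg fork_tree unfolding closed_fork_def by metis
qed

lemma rho_str_true: "rho_str (w @ [True]) = rho_str w + 1"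
proof (rule antisym)
  obtain T lab where c: "closed_fork (w @ [True]) T lab" "rho_fork (w @ [True]) T lab = rho_str (w @ [True])"
    using rho_str_props(2) by blast
  have c2: "closed_fork w T lab" using c(1) closed_true[of w T lab] by simp
  show "rho_str (w @ [True]) \<le> rho_str w + 1"
    using c(2) rho_fork_true[OF c2] rho_str_props(1)[OF c2] by simp
next
  obtain T lab where c: "closed_fork w T lab" "rho_fork w T lab = rho_str w"
    using rho_str_props(2) by blast
  have c2: "closed_fork (w @ [True]) T lab" using c(1) closed_true[of w T lab] by simp
  show "rho_str w + 1 \<le> rho_str (w @ [True])"
    using c(2) rho_fork_true[OF c(1)] rho_str_props(1)[OF c2] by simp
qed

lemma mu_fork_true:
  assumes "closed_fork (x @ y) T lab"
  shows "mu_fork x (y @ [True]) T lab = mu_fork x y T lab + 1"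
  using muw_true[OF assms, of x] unfolding mu_fork_muw by simp

lemma mu_str_true: "mu_str x (y @ [True]) = mu_str x y + 1"
proof (rule antisym)
  obtain T lab where c: "closed_fork (x @ y @ [True]) T lab" "mu_fork x (y @ [True]) T lab = mu_str x (y @ [True])"
    using mu_str_props(2)[of x "y @ [True]"] by auto
  have c2: "closed_fork (x @ y) T lab" using c(1) closed_true[of "x @ y" T lab] by simp
  show "mu_str x (y @ [True]) \<le> mu_str x y + 1"
    using c(2) mu_fork_true[OF c2] mu_str_props(1)[OF c2] by simp
next
  obtain T lab where c: "closed_fork (x @ y) T lab" "mu_fork x y T lab = mu_str x y"
    using mu_str_props(2) by blast
  have c2: "closed_fork (x @ (y @ [True])) T lab" using c(1) closed_true[of "x @ y" T lab] by simp
  show "mu_str x y + 1 \<le> mu_str x (y @ [True])"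
    using c(2) mu_fork_true[OF c(1)] mu_str_props(1)[OF c2] by simp
qed



lemma extend2:
  assumes c: "closed_fork w T lab" and tT: "t \<in> T" and r: "reach w T lab t \<ge> 0"
  shows "\<exists>T' lab'. closed_fork (w @ [False]) T' lab' \<and> T \<subseteq> T'
     \<and> (\<forall>s\<in>T. reach (w @ [False]) T' lab' s = reach w T lab s - 1)
     \<and> (\<forall>s1\<in>T. \<forall>s2\<in>T. disjoint_over x lab' s1 s2 = disjoint_over x lab s1 s2)
     \<and> (\<exists>v\<in>T'. reach (w @ [False]) T' lab' v = 0 \<and> (\<forall>s\<in>T. disjoint_over x lab t s \<longrightarrow> disjoint_over x lab' v s))"
proof -
  have tr: "is_tree T" using c fork_tree unfolding closed_fork_def by blast
  obtain T' lab' where c': "closed_fork (w @ [False]) T' lab'" and sub: "T \<subseteq> T'"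
    and agree: "\<forall>s\<in>T. lab' s = lab s" and ml: "max_len T' = Suc (max_len T)"
    and v: "\<exists>v\<in>T'. reach (w @ [False]) T' lab' v = 0 \<and> (\<forall>u. prefix u v \<longrightarrow> u \<in> T \<longrightarrow> prefix u t)"
    using extend[OF c tT r] by blast
  have R: "\<forall>s\<in>T. reach (w @ [False]) T' lab' s = reach w T lab s - 1"
  proof
    fix s assume "s \<in> T"
    then have "reserve w lab' s = reserve w lab s" using agree unfolding reserve_def by simp
    then show "reach (w @ [False]) T' lab' s = reach w T lab s - 1"
      unfolding reach_def gap_def reserve_false ml by simp
  qed
  have D: "\<forall>s1\<in>T. \<forall>s2\<in>T. disjoint_over x lab' s1 s2 = disjoint_over x lab s1 s2"
    using disj_agree[OF tr _ _ agree] by blast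
  obtain v where vT: "v \<in> T'" "reach (w @ [False]) T' lab' v = 0"
    and vp: "\<forall>u. prefix u v \<longrightarrow> u \<in> T \<longrightarrow> prefix u t" using v by blast
  have V: "disjoint_over x lab' v s" if "s \<in> T" "disjoint_over x lab t s" for s
    unfolding disjoint_over_def
  proof
    assume "\<exists>u. u \<noteq> [] \<and> prefix u v \<and> prefix u s \<and> length x < lab' u"
    then obtain u where u: "u \<noteq> []" "prefix u v" "prefix u s" "length x < lab' u" by blast
    have uT: "u \<in> T" using tree_prefix[OF tr that(1) u(3)] .
    then have "prefix u t" "lab' u = lab u" using vp u(2) agree by auto
    then show False using that(2) u unfolding disjoint_over_def by auto
  qed
  show ?thesis using c' sub R D vT V by blast
qed

lemma not_disj_self:
  assumes "v \<noteq> []" "lab v > length x" shows "\<not> disjoint_over x lab v v"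
  using assms unfolding disjoint_over_def by blast

lemma false_upper:
  assumes c: "closed_fork (x @ y @ [False]) T' lab'"
  shows "rho_fork (x @ y @ [False]) T' lab' \<le> max (rho_str (x @ y) - 1) 0"
    "mu_fork x (y @ [False]) T' lab' \<le>
      (if rho_str (x @ y) > mu_str x y \<and> mu_str x y = 0 then 0 else mu_str x y - 1)"
proof -
  have c': "closed_fork ((x @ y) @ [False]) T' lab'" using c by simp
  obtain T where T: "closed_fork (x @ y) T lab'" "T \<subseteq> T'" and
     vex: "\<exists>v\<in>T'. lab' v = Suc (length (x @ y)) \<and> reach (x @ y @ [False]) T' lab' v \<le> 0 \<and>
        (\<forall>s\<in>T'. s \<noteq> v \<longrightarrow> (\<exists>h\<in>T. prefix h s \<and> reach (x @ y @ [False]) T' lab' s \<le> reach (x @ y) T lab' h - 1)) \<and>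
        (\<exists>h\<in>T. prefix h v \<and> reach (x @ y) T lab' h \<ge> 0)"
    using restrict[OF c'] unfolding append_assoc by blast
  obtain v where v: "v \<in> T'" "lab' v = Suc (length (x @ y))" "reach (x @ y @ [False]) T' lab' v \<le> 0"
    and P1: "\<And>s. s \<in> T' \<Longrightarrow> s \<noteq> v \<Longrightarrow> (\<exists>h\<in>T. prefix h s \<and> reach (x @ y @ [False]) T' lab' s \<le> reach (x @ y) T lab' h - 1)"
    and P2: "\<exists>h\<in>T. prefix h v \<and> reach (x @ y) T lab' h \<ge> 0"
    using vex by blast
  have fk': "is_fork (x @ y @ [False]) T' lab'" using c unfolding closed_fork_def by blast
  have tr': "is_tree T'" using fork_tree[OF fk'] .
  have tr: "is_tree T" using T(1) fork_tree unfolding closed_fork_def by blast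
  have vne: "v \<noteq> []" using v(2) fk' unfolding is_fork_def by auto
  have rle: "reach (x @ y) T lab' h \<le> rho_str (x @ y)" if "h \<in> T" for h
  proof -
    have "reach (x @ y) T lab' h \<le> rho_fork (x @ y) T lab'"
      using rho_fork_props(1)[OF tr, where w="x @ y" and lab=lab'] that by blast
    then show ?thesis using rho_str_props(1)[OF T(1)] by linarith
  qed
  show "rho_fork (x @ y @ [False]) T' lab' \<le> max (rho_str (x @ y) - 1) 0"
  proof -
    obtain s where s: "s \<in> T'" "reach (x @ y @ [False]) T' lab' s = rho_fork (x @ y @ [False]) T' lab'"
      using rho_fork_props(2)[OF tr'] by blast
    show ?thesis
    proof (cases "s = v")
      case True then show ?thesis using s v by simp
    next
      case False
      then obtain h where "h \<in> T" "reach (x @ y @ [False]) T' lab' s \<le> reach (x @ y) T lab' h - 1"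
        using P1[OF s(1)] by blast
      then show ?thesis using s rle by fastforce
    qed
  qed
  let ?mu = "mu_str x y" and ?rho = "rho_str (x @ y)"
  let ?tg = "(if ?rho > ?mu \<and> ?mu = 0 then 0 else ?mu - 1)"
  let ?r' = "reach (x @ y @ [False]) T' lab'" and ?r = "reach (x @ y) T lab'"
  have muF: "min (?r h1) (?r h2) \<le> ?mu" if "h1 \<in> T" "h2 \<in> T" "disjoint_over x lab' h1 h2" for h1 h2
  proof -
    have "min (?r h1) (?r h2) \<le> muw (x @ y) x T lab'" using muw_props(1)[OF tr that] .
    also have "\<dots> \<le> ?mu" using mu_str_props(1)[OF T(1)] unfolding mu_fork_muw .
    finally show ?thesis .
  qed
  have caseA: "min (?r' a) (?r' b) \<le> ?tg" if ab: "a \<in> T'" "b \<in> T'" "a \<noteq> v" "b \<noteq> v" "disjoint_over x lab' a b" for a b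
  proof -
    obtain h1 where h1: "h1 \<in> T" "prefix h1 a" "?r' a \<le> ?r h1 - 1" using P1[OF ab(1,3)] by blast
    obtain h2 where h2: "h2 \<in> T" "prefix h2 b" "?r' b \<le> ?r h2 - 1" using P1[OF ab(2,4)] by blast
    have "disjoint_over x lab' h1 h2" using disj_mono[OF h1(2) h2(2) ab(5)] .
    then have "min (?r h1) (?r h2) \<le> ?mu" using muF h1(1) h2(1) by blast
    then show ?thesis using h1(3) h2(3) by auto
  qed
  have caseB: "min (?r' v) (?r' b) \<le> ?tg" if ab: "b \<in> T'" "b \<noteq> v" "disjoint_over x lab' v b" for b
  proof -
    obtain h2 where h2: "h2 \<in> T" "prefix h2 b" "?r' b \<le> ?r h2 - 1" using P1[OF ab(1,2)] by blast
    obtain h where h: "h \<in> T" "prefix h v" "?r h \<ge> 0" using P2 by blast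
    have "disjoint_over x lab' h h2" using disj_mono[OF h(2) h2(2) ab(3)] .
    then have m: "?r h \<le> ?mu \<or> ?r h2 \<le> ?mu" using muF h(1) h2(1) by fastforce
    have r2: "?r h2 \<le> ?rho" using rle h2(1) .
    show ?thesis using m r2 h(3) h2(3) v(3) by auto
  qed
  show "mu_fork x (y @ [False]) T' lab' \<le> ?tg"
  proof -
    obtain t1 t2 where t: "t1 \<in> T'" "t2 \<in> T'" "disjoint_over x lab' t1 t2"
      "min (?r' t1) (?r' t2) = muw (x @ y @ [False]) x T' lab'"
      using muw_props(2)[OF tr', where x=x and lab=lab' and w="x @ y @ [False]"] by blast
    have nvv: "\<not> disjoint_over x lab' v v" using not_disj_self[OF vne] v(2) by simp
    have "min (?r' t1) (?r' t2) \<le> ?tg"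
    proof (cases "t1 = v")
      case True
      then have "t2 \<noteq> v" using nvv t(3) by blast
      then show ?thesis using caseB[OF t(2)] t(3) True by blast
    next
      case False
      show ?thesis
      proof (cases "t2 = v")
        case True
        then have "disjoint_over x lab' v t1" using t(3) disjoint_sym by metis
        then show ?thesis using caseB[OF t(1) False] True by (simp add: min.commute)
      next
        case False
        show ?thesis using caseA[OF t(1,2) \<open>t1 \<noteq> v\<close> False t(3)] .
      qed
    qed
    then show ?thesis using t(4) unfolding mu_fork_muw by simp
  qed
qed



lemma false_lower:
  assumes c: "closed_fork (x @ y) T lab" and r: "rho_fork (x @ y) T lab = rho_str (x @ y)"
    and m: "mu_fork x y T lab = mu_str x y"
  shows "\<exists>T' lab'. closed_fork (x @ y @ [False]) T' lab'
    \<and> rho_fork (x @ y @ [False]) T' lab' \<ge> max (rho_str (x @ y) - 1) 0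
    \<and> mu_fork x (y @ [False]) T' lab' \<ge>
      (if rho_str (x @ y) > mu_str x y \<and> mu_str x y = 0 then 0 else mu_str x y - 1)"
proof -
  let ?mu = "mu_str x y" and ?rho = "rho_str (x @ y)"
  let ?tg = "(if ?rho > ?mu \<and> ?mu = 0 then 0 else ?mu - 1)"
  have tr: "is_tree T" using c fork_tree unfolding closed_fork_def by blast
  obtain tr where trT: "tr \<in> T" "reach (x @ y) T lab tr = ?rho"
    using rho_fork_props(2)[OF tr, where w="x @ y" and lab=lab] r by auto
  obtain t1 t2 where t: "t1 \<in> T" "t2 \<in> T" "disjoint_over x lab t1 t2"
      "min (reach (x @ y) T lab t1) (reach (x @ y) T lab t2) = ?mu"
    using muw_props(2)[OF tr, where x=x and lab=lab and w="x @ y"] m unfolding mu_fork_muw by auto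
  have rho0: "?rho \<ge> 0" by (rule rho_str_nonneg)
  have rhoF': "rho_fork (x @ y @ [False]) T' lab' \<ge> max (?rho - 1) 0"
    if "closed_fork (x @ y @ [False]) T' lab'" "tr \<in> T'"
      "reach (x @ y @ [False]) T' lab' tr = ?rho - 1" for T' lab'
  proof -
    have tr': "is_tree T'" using that(1) fork_tree unfolding closed_fork_def by blast
    have "reach (x @ y @ [False]) T' lab' tr \<le> rho_fork (x @ y @ [False]) T' lab'"
      using rho_fork_props(1)[OF tr', where w="x @ y @ [False]" and lab=lab'] that(2) by blast
    then show ?thesis using that(3) rho_fork_nonneg[OF tr', of "x @ y @ [False]" lab'] by simp
  qed
  show ?thesis
  proof (cases "?rho > ?mu \<and> ?mu = 0")
    case True
    then have "disjoint_over x lab t1 tr \<or> disjoint_over x lab t2 tr" using disj_triangle[OF t(3)] by blast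
    then obtain ti where ti: "ti \<in> T" "disjoint_over x lab ti tr" "reach (x @ y) T lab ti \<ge> 0"
      using t True by (metis min.bounded_iff order_refl)
    obtain T' lab' where c': "closed_fork ((x @ y) @ [False]) T' lab'" and sub: "T \<subseteq> T'"
      and R: "\<forall>s\<in>T. reach ((x @ y) @ [False]) T' lab' s = reach (x @ y) T lab s - 1"
      and V: "\<exists>v\<in>T'. reach ((x @ y) @ [False]) T' lab' v = 0 \<and> (\<forall>s\<in>T. disjoint_over x lab ti s \<longrightarrow> disjoint_over x lab' v s)"
      using extend2[OF c ti(1) ti(3), where x=x] by blast
    obtain v where v: "v \<in> T'" "reach (x @ y @ [False]) T' lab' v = 0" "disjoint_over x lab' v tr"
      using V ti(2) trT(1) by auto
    have c'': "closed_fork (x @ y @ [False]) T' lab'" using c' by simp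
    have tr': "is_tree T'" using c' fork_tree unfolding closed_fork_def by blast
    have rtr: "reach (x @ y @ [False]) T' lab' tr = ?rho - 1" using R trT by simp
    have "min (reach (x @ y @ [False]) T' lab' v) (reach (x @ y @ [False]) T' lab' tr) \<le> mu_fork x (y @ [False]) T' lab'"
      using muw_props(1)[OF tr' v(1) _ v(3)] sub trT(1) unfolding mu_fork_muw by auto
    then have "mu_fork x (y @ [False]) T' lab' \<ge> ?tg" using v(2) rtr True by simp
    then show ?thesis using c'' rhoF'[OF c''] sub trT(1) rtr by blast
  next
    case False
    have "reach (x @ y) T lab tr \<ge> 0" using trT rho0 by simp
    obtain T' lab' where c': "closed_fork ((x @ y) @ [False]) T' lab'" and sub: "T \<subseteq> T'"
      and R: "\<forall>s\<in>T. reach ((x @ y) @ [False]) T' lab' s = reach (x @ y) T lab s - 1"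
      and D: "\<forall>s1\<in>T. \<forall>s2\<in>T. disjoint_over x lab' s1 s2 = disjoint_over x lab s1 s2"
      using extend2[OF c trT(1) \<open>reach (x @ y) T lab tr \<ge> 0\<close>, where x=x] by blast
    have c'': "closed_fork (x @ y @ [False]) T' lab'" using c' by simp
    have tr': "is_tree T'" using c' fork_tree unfolding closed_fork_def by blast
    have rtr: "reach (x @ y @ [False]) T' lab' tr = ?rho - 1" using R trT by simp
    have d': "disjoint_over x lab' t1 t2" using D t by blast
    have "min (reach (x @ y @ [False]) T' lab' t1) (reach (x @ y @ [False]) T' lab' t2) \<le> mu_fork x (y @ [False]) T' lab'"
      using muw_props(1)[OF tr' _ _ d'] sub t(1,2) unfolding mu_fork_muw by auto
    moreover have "min (reach (x @ y @ [False]) T' lab' t1) (reach (x @ y @ [False]) T' lab' t2) = ?mu - 1"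
      using R t by simp
    moreover have "?tg = ?mu - 1" using False by (simp only: if_False)
    ultimately have "mu_fork x (y @ [False]) T' lab' \<ge> ?tg" by linarith
    then show ?thesis using c'' rhoF'[OF c''] sub trT(1) rtr by blast
  qed
qed

definition goodF :: "bool list \<Rightarrow> bool list \<Rightarrow> bool" where
  "goodF x y \<longleftrightarrow> (\<exists>T lab. closed_fork (x @ y) T lab \<and> rho_fork (x @ y) T lab = rho_str (x @ y)
           \<and> mu_fork x y T lab = mu_str x y)"

lemma false_all:
  assumes "goodF x y"
  shows "goodF x (y @ [False])"
    "mu_str x (y @ [False]) = (if rho_str (x @ y) > mu_str x y \<and> mu_str x y = 0 then 0 else mu_str x y - 1)"
proof -
  let ?tg = "(if rho_str (x @ y) > mu_str x y \<and> mu_str x y = 0 then 0 else mu_str x y - 1)"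
  obtain T lab where F: "closed_fork (x @ y) T lab" "rho_fork (x @ y) T lab = rho_str (x @ y)"
      "mu_fork x y T lab = mu_str x y" using assms unfolding goodF_def by blast
  obtain T' lab' where F': "closed_fork (x @ y @ [False]) T' lab'"
    "rho_fork (x @ y @ [False]) T' lab' \<ge> max (rho_str (x @ y) - 1) 0"
    "mu_fork x (y @ [False]) T' lab' \<ge> ?tg" using false_lower[OF F] by blast
  have c1: "closed_fork (x @ (y @ [False])) T' lab'" using F'(1) by simp
  obtain T2 lab2 where F2: "closed_fork (x @ y @ [False]) T2 lab2" "rho_fork (x @ y @ [False]) T2 lab2 = rho_str (x @ y @ [False])"
    using rho_str_props(2)[of "x @ y @ [False]"] by blast
  obtain T3 lab3 where F3: "closed_fork (x @ (y @ [False])) T3 lab3" "mu_fork x (y @ [False]) T3 lab3 = mu_str x (y @ [False])"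
    using mu_str_props(2)[of x "y @ [False]"] by blast
  have F3': "closed_fork (x @ y @ [False]) T3 lab3" using F3(1) by simp
  have a1: "rho_fork (x @ y @ [False]) T' lab' \<le> rho_str (x @ y @ [False])" using rho_str_props(1)[OF F'(1)] .
  have a2: "rho_str (x @ y @ [False]) \<le> max (rho_str (x @ y) - 1) 0" using false_upper(1)[OF F2(1)] F2(2) by simp
  have b1: "mu_fork x (y @ [False]) T' lab' \<le> mu_str x (y @ [False])" using mu_str_props(1)[OF c1] .
  have b2: "mu_str x (y @ [False]) \<le> ?tg" using false_upper(2)[OF F3'] F3(2) by simp
  show "mu_str x (y @ [False]) = ?tg" using F'(3) b1 b2 by linarith
  have "rho_fork (x @ y @ [False]) T' lab' = rho_str (x @ y @ [False])" using F'(2) a1 a2 by linarith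
  moreover have "mu_fork x (y @ [False]) T' lab' = mu_str x (y @ [False])" using F'(3) b1 b2 by linarith
  ultimately show "goodF x (y @ [False])" unfolding goodF_def using c1 by auto
qed

lemma true_all:
  assumes "goodF x y"
  shows "goodF x (y @ [True])"
proof -
  obtain T lab where F: "closed_fork (x @ y) T lab" "rho_fork (x @ y) T lab = rho_str (x @ y)"
      "mu_fork x y T lab = mu_str x y" using assms unfolding goodF_def by blast
  have c: "closed_fork (x @ y @ [True]) T lab" using F(1) closed_true[of "x @ y" T lab] by simp
  have "rho_fork (x @ y @ [True]) T lab = rho_str (x @ y @ [True])"
    using rho_fork_true[OF F(1)] rho_str_true[of "x @ y"] F(2) by simp
  moreover have "mu_fork x (y @ [True]) T lab = mu_str x (y @ [True])"
    using mu_fork_true[OF F(1)] mu_str_true[of x y] F(3) by simp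
  ultimately show ?thesis unfolding goodF_def using c by auto
qed

lemma mu_fork_base:
  assumes c: "closed_fork x T lab"
  shows "mu_fork x [] T lab = rho_fork x T lab"
proof -
  have fk: "is_fork x T lab" using c unfolding closed_fork_def by blast
  have tr: "is_tree T" using fork_tree[OF fk] .
  have alld: "disjoint_over x lab t1 t2" if "t1 \<in> T" for t1 t2
    unfolding disjoint_over_def using fork_lab_le[OF fk] tree_prefix[OF tr that] by fastforce
  have "muw x x T lab = rho_fork x T lab"
  proof (rule antisym)
    obtain t1 t2 where t: "t1 \<in> T" "min (reach x T lab t1) (reach x T lab t2) = muw x x T lab"
      using muw_props(2)[OF tr, where x=x and lab=lab and w=x] by blast
    have "reach x T lab t1 \<le> rho_fork x T lab" using rho_fork_props(1)[OF tr] t(1) by blast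
    then show "muw x x T lab \<le> rho_fork x T lab" using t(2) by linarith
  next
    obtain t where t: "t \<in> T" "reach x T lab t = rho_fork x T lab" using rho_fork_props(2)[OF tr] by blast
    have "min (reach x T lab t) (reach x T lab t) \<le> muw x x T lab" using muw_props(1)[OF tr t(1) t(1) alld[OF t(1)]] .
    then show "rho_fork x T lab \<le> muw x x T lab" using t(2) by simp
  qed
  then show ?thesis unfolding mu_fork_muw by simp
qed

lemma base_all: "goodF x []" "mu_str x [] = rho_str x"
proof -
  obtain T lab where F: "closed_fork x T lab" "rho_fork x T lab = rho_str x" using rho_str_props(2) by blast
  obtain T2 lab2 where F2: "closed_fork (x @ []) T2 lab2" "mu_fork x [] T2 lab2 = mu_str x []"
    using mu_str_props(2)[of x "[]"] by blast
  have "mu_str x [] \<le> rho_str x" using F2 mu_fork_base[of x T2 lab2] rho_str_props(1)[of x T2 lab2] by simp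
  moreover have "mu_fork x [] T lab \<le> mu_str x []" using mu_str_props(1)[of x "[]" T lab] F(1) by simp
  ultimately show "mu_str x [] = rho_str x" using mu_fork_base[OF F(1)] F(2) by simp
  then show "goodF x []" unfolding goodF_def using F mu_fork_base[OF F(1)] by auto
qed

lemma good_all: "goodF x y"
proof (induction y rule: rev_induct)
  case Nil then show ?case by (rule base_all)
next
  case (snoc b y)
  then show ?case using false_all(1) true_all by (cases b) auto
qed

theorem lemma3:
  fixes x :: "bool list"
  shows "mu_str x [] = rho_str x
    \<and> (\<forall>y. x @ y \<noteq> [] \<longrightarrow>
          mu_str x (y @ [True]) = mu_str x y + 1
        \<and> mu_str x (y @ [False]) =
            (if rho_str (x @ y) > mu_str x y \<and> mu_str x y = 0 then 0 else mu_str x y - 1))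
    \<and> (\<forall>y. \<exists>T lab. closed_fork (x @ y) T lab \<and> rho_fork (x @ y) T lab = rho_str (x @ y)
           \<and> mu_fork x y T lab = mu_str x y)"
  using base_all(2) mu_str_true false_all(2)[OF good_all] good_all unfolding goodF_def by blast


end
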